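(* Assume $\mathbf a,\mathbf b\in\Delta^n$ with strictly positive entries, and let $\eta>0$. Let $(\mathbf u^*,\mathbf v^* )$ be the $(\mathbf u,\mathbf v)$-part of an optimal solution of the dual problem $\max_{(\mathbf u,\mathbf v,\mathbf t)\in\mathcal X}\{-\frac{1}{4\eta}\sum_{ij}t_{ij}^2-\tau\langle e^{-\mathbf u/\tau},\mathbf a\rangle-\tau\langle e^{-\mathbf v/\tau},\mathbf b\rangle+\mathbf a^\top\mathbf 1_n+\mathbf b^\top\mathbf 1_n\}$, $\mathcal X=\{(\mathbf u,\mathbf v,\mathbf t):t_{ij}\ge0,\ t_{ij}\ge u_i+v_j-C_{ij}\}$. Then for all $i,j\in[n]$, $u^*_i\le\|C\|_\infty+2\eta$ and $v^*_j\le\|C\|_\infty+2\eta$.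
   Context: Let $n\ge1$, $C\in\mathbb{R}^{n\times n}$ with nonnegative entries and $\|C\|_\infty=\max_{i,j}|C_{ij}|$; $\tau>0$; $\Delta^n=\{\mathbf x\in\mathbb{R}^n_+:\sum_i x_i=1\}$. $e^{-\mathbf u/\tau}$ is the entrywise exponential and $\mathbf 1_n$ the all-ones vector. *)

theory Defs
  imports "HOL-Analysis.Analysis"
begin

definition max_abs_norm :: "real^'n^'n \<Rightarrow> real" where
  "max_abs_norm C = Max {\<bar>C $ i $ j\<bar> | i j. True}"

definition prob_simplex :: "(real^'n) set" where
  "prob_simplex = {x. (\<forall>i. x $ i \<ge> 0) \<and> (\<Sum>i\<in>UNIV. x $ i) = 1}"

definition dual_feasible :: "real^'n^'n \<Rightarrow> real^'n \<Rightarrow> real^'n \<Rightarrow> real^'n^'n \<Rightarrow> bool" where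
  "dual_feasible C u v t \<longleftrightarrow>
     (\<forall>i j. t $ i $ j \<ge> 0 \<and> t $ i $ j \<ge> u $ i + v $ j - C $ i $ j)"

definition dual_obj :: "real \<Rightarrow> real \<Rightarrow> real^'n \<Rightarrow> real^'n \<Rightarrow> real^'n \<Rightarrow> real^'n \<Rightarrow> real^'n^'n \<Rightarrow> real" where
  "dual_obj \<eta> \<tau> a b u v t =
     - (1 / (4 * \<eta>)) * (\<Sum>i\<in>UNIV. \<Sum>j\<in>UNIV. (t $ i $ j)\<^sup>2)
     - \<tau> * (\<Sum>i\<in>UNIV. exp (- u $ i / \<tau>) * a $ i)
     - \<tau> * (\<Sum>j\<in>UNIV. exp (- v $ j / \<tau>) * b $ j)
     + (\<Sum>i\<in>UNIV. a $ i) + (\<Sum>j\<in>UNIV. b $ j)"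

definition dual_optimal :: "real^'n^'n \<Rightarrow> real \<Rightarrow> real \<Rightarrow> real^'n \<Rightarrow> real^'n \<Rightarrow> real^'n \<Rightarrow> real^'n \<Rightarrow> real^'n^'n \<Rightarrow> bool" where
  "dual_optimal C \<eta> \<tau> a b u v t \<longleftrightarrow>
     dual_feasible C u v t \<and>
     (\<forall>u' v' t'. dual_feasible C u' v' t' \<longrightarrow>
        dual_obj \<eta> \<tau> a b u' v' t' \<le> dual_obj \<eta> \<tau> a b u v t)"

end

theory Submission imports Defs begin

lemma sum_upd:
  fixes g h :: "'a \<Rightarrow> real"
  assumes "finite A" "k \<in> A" "\<And>m. m \<in> A \<Longrightarrow> m \<noteq> k \<Longrightarrow> g m = h m"
  shows "sum g A = sum h A - h k + g k"
proof -
  have "sum g A = g k + sum g (A - {k})" using assms by (simp add: sum.remove)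
  also have "sum g (A - {k}) = sum h (A - {k})" using assms(3) by (intro sum.cong) auto
  also have "sum h (A - {k}) = sum h A - h k" using assms by (simp add: sum.remove)
  finally show ?thesis by simp
qed

lemma obj_diff:
  fixes t t' :: "real^'n^'n" and u u' :: "real^'n"
  assumes "\<And>i j. i \<noteq> k \<Longrightarrow> t' $ i $ j = t $ i $ j"
    and "\<And>i. i \<noteq> k \<Longrightarrow> u' $ i = u $ i"
  shows "dual_obj \<eta> \<tau> a b u' v t' - dual_obj \<eta> \<tau> a b u v t =
     - (1 / (4 * \<eta>)) * ((\<Sum>j\<in>UNIV. (t' $ k $ j)\<^sup>2) - (\<Sum>j\<in>UNIV. (t $ k $ j)\<^sup>2))
     - \<tau> * (exp (- u' $ k / \<tau>) * a $ k - exp (- u $ k / \<tau>) * a $ k)"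
proof -
  have 1: "(\<Sum>i\<in>UNIV. \<Sum>j\<in>UNIV. (t' $ i $ j)\<^sup>2) = (\<Sum>i\<in>UNIV. \<Sum>j\<in>UNIV. (t $ i $ j)\<^sup>2)
      - (\<Sum>j\<in>UNIV. (t $ k $ j)\<^sup>2) + (\<Sum>j\<in>UNIV. (t' $ k $ j)\<^sup>2)"
    by (rule sum_upd) (auto simp: assms(1))
  have 2: "(\<Sum>i\<in>UNIV. exp (- u' $ i / \<tau>) * a $ i) = (\<Sum>i\<in>UNIV. exp (- u $ i / \<tau>) * a $ i)
      - exp (- u $ k / \<tau>) * a $ k + exp (- u' $ k / \<tau>) * a $ k"
    by (rule sum_upd) (auto simp: assms(2))
  show ?thesis unfolding dual_obj_def 1 2 by (simp add: algebra_simps)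
qed

lemma opt_le:
  assumes "dual_optimal C \<eta> \<tau> a b u v t" "dual_feasible C u' v' t'"
  shows "dual_obj \<eta> \<tau> a b u' v' t' \<le> dual_obj \<eta> \<tau> a b u v t"
  using assms unfolding dual_optimal_def by blast

lemma comp_slack:
  fixes C t :: "real^'n^'n"
  assumes opt: "dual_optimal C \<eta> \<tau> a b u v t" and eta: "\<eta> > 0"
    and pos: "t $ k $ l > 0"
  shows "t $ k $ l = u $ k + v $ l - C $ k $ l"
proof (rule ccontr)
  assume ne: "\<not> ?thesis"
  have feas: "dual_feasible C u v t" using opt unfolding dual_optimal_def by blast
  hence ge: "t $ k $ l > u $ k + v $ l - C $ k $ l" using ne by (metis dual_feasible_def order_le_less)
  define w where "w = max 0 (u $ k + v $ l - C $ k $ l)"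
  define t' where "t' = (\<chi> i j. if i = k \<and> j = l then w else t $ i $ j)"
  have f': "dual_feasible C u v t'" using feas unfolding dual_feasible_def t'_def w_def by auto
  have le: "dual_obj \<eta> \<tau> a b u v t' \<le> dual_obj \<eta> \<tau> a b u v t" by (rule opt_le[OF opt f'])
  have d: "dual_obj \<eta> \<tau> a b u v t' - dual_obj \<eta> \<tau> a b u v t =
     - (1 / (4 * \<eta>)) * ((\<Sum>j\<in>UNIV. (t' $ k $ j)\<^sup>2) - (\<Sum>j\<in>UNIV. (t $ k $ j)\<^sup>2))"
    using obj_diff[of k t' t u u \<eta> \<tau> a b v] by (simp add: t'_def)
  have s: "(\<Sum>j\<in>UNIV. (t' $ k $ j)\<^sup>2) = (\<Sum>j\<in>UNIV. (t $ k $ j)\<^sup>2) - (t $ k $ l)\<^sup>2 + w\<^sup>2"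
    using sum_upd[of UNIV l "\<lambda>j. (t' $ k $ j)\<^sup>2" "\<lambda>j. (t $ k $ j)\<^sup>2"] by (auto simp: t'_def)
  have w0: "0 \<le> w" "w < t $ k $ l" using pos ge by (auto simp: w_def)
  have "w\<^sup>2 < (t $ k $ l)\<^sup>2" using w0 by (simp add: power_strict_mono)
  hence "dual_obj \<eta> \<tau> a b u v t' - dual_obj \<eta> \<tau> a b u v t > 0"
    using eta unfolding d s by (simp add: field_simps)
  thus False using le by simp
qed

lemma lim_le1:
  fixes A B c \<tau> :: real
  assumes "\<tau> > 0" "\<forall>\<delta>>0. A - c*\<delta> \<le> B*exp(\<delta>/\<tau>)"
  shows "A \<le> B"
proof -
  have 1: "((\<lambda>\<delta>. A - c*\<delta>) \<longlongrightarrow> A - c*0) (at_right 0)"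
    by (intro tendsto_intros)
  have 2: "((\<lambda>\<delta>. B*exp(\<delta>/\<tau>)) \<longlongrightarrow> B*exp(0/\<tau>)) (at_right 0)"
    using assms(1) by (intro tendsto_intros) auto
  have 3: "eventually (\<lambda>\<delta>. A - c*\<delta> \<le> B*exp(\<delta>/\<tau>)) (at_right (0::real))"
    using assms eventually_at_right_less[of 0] by (auto elim: eventually_mono)
  show ?thesis using tendsto_le[OF trivial_limit_at_right_real 2 1 3] by simp
qed

lemma lim_le2:
  fixes A B c \<tau> :: real
  assumes "\<tau> > 0" "\<forall>\<delta>>0. B*exp(-\<delta>/\<tau>) \<le> A + c*\<delta>"
  shows "B \<le> A"
proof -
  have 1: "((\<lambda>\<delta>. A + c*\<delta>) \<longlongrightarrow> A + c*0) (at_right 0)"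
    by (intro tendsto_intros)
  have 2: "((\<lambda>\<delta>. B*exp(-\<delta>/\<tau>)) \<longlongrightarrow> B*exp(-0/\<tau>)) (at_right 0)"
    using assms(1) by (intro tendsto_intros) auto
  have 3: "eventually (\<lambda>\<delta>. B*exp(-\<delta>/\<tau>) \<le> A + c*\<delta>) (at_right (0::real))"
    using assms eventually_at_right_less[of 0] by (auto elim: eventually_mono)
  show ?thesis using tendsto_le[OF trivial_limit_at_right_real 1 2 3] by simp
qed

lemma sq_max_aux: "(x::real) \<ge> 0 \<Longrightarrow> d > 0 \<Longrightarrow> x\<^sup>2 - (max 0 (x - d))\<^sup>2 \<ge> 2*x*d - d\<^sup>2"
proof (cases "x \<ge> d")
  case True thus ?thesis by (simp add: power2_eq_square algebra_simps max_def)
next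
  case False
  have "(x - d)\<^sup>2 \<ge> 0" by simp
  thus ?thesis using False by (simp add: power2_eq_square algebra_simps max_def)
qed

lemma row_upper:
  fixes C t :: "real^'n^'n"
  assumes opt: "dual_optimal C \<eta> \<tau> a b u v t" and eta: "\<eta> > 0" and tau: "\<tau> > 0"
    and ak: "a $ k \<ge> 0"
  shows "(\<Sum>j\<in>UNIV. t $ k $ j) \<le> 2 * \<eta> * (a $ k * exp (- u $ k / \<tau>))"
proof -
  have feas: "dual_feasible C u v t" using opt unfolding dual_optimal_def by blast
  define S where "S = (\<Sum>j\<in>UNIV. t $ k $ j)"
  define E where "E = a $ k * exp (- u $ k / \<tau>)"
  define n where "n = real CARD('n)"
  have E0: "E \<ge> 0" using ak by (simp add: E_def)
  have key: "\<forall>\<delta>>0. S/(2*\<eta>) - (n/(4*\<eta>))*\<delta> \<le> E*exp(\<delta>/\<tau>)"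
  proof (intro allI impI)
    fix \<delta> :: real assume d: "\<delta> > 0"
    define u' where "u' = (\<chi> m. if m = k then u $ m - \<delta> else u $ m)"
    define t' where "t' = (\<chi> i j. if i = k then max 0 (t $ i $ j - \<delta>) else t $ i $ j)"
    have f': "dual_feasible C u' v t'" unfolding dual_feasible_def
    proof (intro allI)
      fix i j
      show "0 \<le> t' $ i $ j \<and> u' $ i + v $ j - C $ i $ j \<le> t' $ i $ j"
        using feas[unfolded dual_feasible_def, rule_format, of i j]
        by (auto simp: t'_def u'_def le_max_iff_disj)
    qed
    have le: "dual_obj \<eta> \<tau> a b u' v t' \<le> dual_obj \<eta> \<tau> a b u v t" by (rule opt_le[OF opt f'])
    have dd: "dual_obj \<eta> \<tau> a b u' v t' - dual_obj \<eta> \<tau> a b u v t =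
     - (1 / (4 * \<eta>)) * ((\<Sum>j\<in>UNIV. (t' $ k $ j)\<^sup>2) - (\<Sum>j\<in>UNIV. (t $ k $ j)\<^sup>2))
     - \<tau> * (exp (- u' $ k / \<tau>) * a $ k - exp (- u $ k / \<tau>) * a $ k)"
      by (rule obj_diff) (auto simp: t'_def u'_def)
    have ex: "exp (- u' $ k / \<tau>) = exp (- u $ k / \<tau>) * exp (\<delta>/\<tau>)"
    proof -
      have "- u' $ k / \<tau> = - u $ k / \<tau> + \<delta>/\<tau>" by (simp add: u'_def diff_divide_distrib)
      thus ?thesis by (metis exp_add)
    qed
    have sq: "(\<Sum>j\<in>UNIV. (t $ k $ j)\<^sup>2) - (\<Sum>j\<in>UNIV. (t' $ k $ j)\<^sup>2) \<ge> 2*\<delta>*S - n*\<delta>\<^sup>2"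
    proof -
      have "(\<Sum>j\<in>UNIV. (t $ k $ j)\<^sup>2) - (\<Sum>j\<in>UNIV. (t' $ k $ j)\<^sup>2)
          = (\<Sum>j\<in>UNIV. (t $ k $ j)\<^sup>2 - (max 0 (t $ k $ j - \<delta>))\<^sup>2)"
        by (simp add: t'_def sum_subtractf)
      also have "\<dots> \<ge> (\<Sum>j\<in>UNIV. 2 * t $ k $ j * \<delta> - \<delta>\<^sup>2)"
        using feas d by (intro sum_mono sq_max_aux) (auto simp: dual_feasible_def)
      moreover have "(\<Sum>j\<in>UNIV. 2 * t $ k $ j * \<delta> - \<delta>\<^sup>2) = 2*\<delta>*S - n*\<delta>\<^sup>2"
        by (simp add: S_def n_def sum_subtractf sum_distrib_left sum_distrib_right algebra_simps)
      ultimately show ?thesis by simp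
    qed
    have A: "(2*\<delta>*S - n*\<delta>\<^sup>2)/(4*\<eta>) \<le> \<tau> * E * (exp (\<delta>/\<tau>) - 1)"
    proof -
      have "(2*\<delta>*S - n*\<delta>\<^sup>2)/(4*\<eta>) \<le> ((\<Sum>j\<in>UNIV. (t $ k $ j)\<^sup>2) - (\<Sum>j\<in>UNIV. (t' $ k $ j)\<^sup>2))/(4*\<eta>)"
        using sq eta by (simp add: divide_right_mono)
      also have "\<dots> \<le> \<tau> * E * (exp (\<delta>/\<tau>) - 1)"
        using le dd ex unfolding E_def by (simp add: algebra_simps diff_divide_distrib)
      finally show ?thesis .
    qed
    have B: "exp (\<delta>/\<tau>) - 1 \<le> (\<delta>/\<tau>) * exp (\<delta>/\<tau>)"
    proof -
      have "1 + (-(\<delta>/\<tau>)) \<le> exp (-(\<delta>/\<tau>))" by (rule exp_ge_add_one_self)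
      hence "(1 - \<delta>/\<tau>) * exp (\<delta>/\<tau>) \<le> exp (-(\<delta>/\<tau>)) * exp (\<delta>/\<tau>)"
        by (intro mult_right_mono) auto
      thus ?thesis by (simp add: mult_exp_exp algebra_simps)
    qed
    have "\<tau> * E * (exp (\<delta>/\<tau>) - 1) \<le> \<tau> * E * ((\<delta>/\<tau>) * exp (\<delta>/\<tau>))"
      using B E0 tau by (intro mult_left_mono) auto
    also have "\<dots> = \<delta> * (E * exp (\<delta>/\<tau>))" using tau by simp
    finally have C: "(2*\<delta>*S - n*\<delta>\<^sup>2)/(4*\<eta>) \<le> \<delta> * (E * exp (\<delta>/\<tau>))" using A by linarith
    have "(2*\<delta>*S - n*\<delta>\<^sup>2)/(4*\<eta>) = \<delta> * (S/(2*\<eta>) - (n/(4*\<eta>))*\<delta>)"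
      using eta by (simp add: field_simps power2_eq_square)
    with C d show "S/(2*\<eta>) - (n/(4*\<eta>))*\<delta> \<le> E*exp(\<delta>/\<tau>)" by simp
  qed
  have "S/(2*\<eta>) \<le> E" by (rule lim_le1[OF tau key])
  thus ?thesis using eta unfolding S_def E_def by (simp add: field_simps)
qed

lemma row_lower:
  fixes C t :: "real^'n^'n"
  assumes opt: "dual_optimal C \<eta> \<tau> a b u v t" and eta: "\<eta> > 0" and tau: "\<tau> > 0"
    and ak: "a $ k \<ge> 0"
  shows "2 * \<eta> * (a $ k * exp (- u $ k / \<tau>)) \<le> (\<Sum>j\<in>UNIV. t $ k $ j)"
proof -
  have feas: "dual_feasible C u v t" using opt unfolding dual_optimal_def by blast
  define S where "S = (\<Sum>j\<in>UNIV. t $ k $ j)"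
  define E where "E = a $ k * exp (- u $ k / \<tau>)"
  define n where "n = real CARD('n)"
  have E0: "E \<ge> 0" using ak by (simp add: E_def)
  have key: "\<forall>\<delta>>0. E*exp(-\<delta>/\<tau>) \<le> S/(2*\<eta>) + (n/(4*\<eta>))*\<delta>"
  proof (intro allI impI)
    fix \<delta> :: real assume d: "\<delta> > 0"
    define u' where "u' = (\<chi> m. if m = k then u $ m + \<delta> else u $ m)"
    define t' where "t' = (\<chi> i j. if i = k then t $ i $ j + \<delta> else t $ i $ j)"
    have f': "dual_feasible C u' v t'" unfolding dual_feasible_def
    proof (intro allI)
      fix i j
      show "0 \<le> t' $ i $ j \<and> u' $ i + v $ j - C $ i $ j \<le> t' $ i $ j"
        using feas[unfolded dual_feasible_def, rule_format, of i j] d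
        by (auto simp: t'_def u'_def)
    qed
    have le: "dual_obj \<eta> \<tau> a b u' v t' \<le> dual_obj \<eta> \<tau> a b u v t" by (rule opt_le[OF opt f'])
    have dd: "dual_obj \<eta> \<tau> a b u' v t' - dual_obj \<eta> \<tau> a b u v t =
     - (1 / (4 * \<eta>)) * ((\<Sum>j\<in>UNIV. (t' $ k $ j)\<^sup>2) - (\<Sum>j\<in>UNIV. (t $ k $ j)\<^sup>2))
     - \<tau> * (exp (- u' $ k / \<tau>) * a $ k - exp (- u $ k / \<tau>) * a $ k)"
      by (rule obj_diff) (auto simp: t'_def u'_def)
    have ex: "exp (- u' $ k / \<tau>) = exp (- u $ k / \<tau>) * exp (-\<delta>/\<tau>)"
    proof -
      have "- u' $ k / \<tau> = - u $ k / \<tau> + -\<delta>/\<tau>" by (simp add: u'_def diff_divide_distrib)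
      thus ?thesis by (metis exp_add)
    qed
    have sq: "(\<Sum>j\<in>UNIV. (t' $ k $ j)\<^sup>2) - (\<Sum>j\<in>UNIV. (t $ k $ j)\<^sup>2) = 2*\<delta>*S + n*\<delta>\<^sup>2"
    proof -
      have "(\<Sum>j\<in>UNIV. (t' $ k $ j)\<^sup>2) - (\<Sum>j\<in>UNIV. (t $ k $ j)\<^sup>2)
          = (\<Sum>j\<in>UNIV. (t $ k $ j + \<delta>)\<^sup>2 - (t $ k $ j)\<^sup>2)"
        by (simp add: t'_def sum_subtractf)
      also have "\<dots> = (\<Sum>j\<in>UNIV. 2 * t $ k $ j * \<delta> + \<delta>\<^sup>2)"
        by (intro sum.cong) (auto simp: power2_eq_square algebra_simps)
      also have "\<dots> = 2*\<delta>*S + n*\<delta>\<^sup>2"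
        by (simp add: S_def n_def sum.distrib sum_distrib_left sum_distrib_right algebra_simps)
      finally show ?thesis .
    qed
    have A: "\<tau> * E * (1 - exp (-\<delta>/\<tau>)) \<le> (2*\<delta>*S + n*\<delta>\<^sup>2)/(4*\<eta>)"
    proof -
      have "\<tau> * E * (1 - exp (-\<delta>/\<tau>)) \<le> ((\<Sum>j\<in>UNIV. (t' $ k $ j)\<^sup>2) - (\<Sum>j\<in>UNIV. (t $ k $ j)\<^sup>2))/(4*\<eta>)"
        using le dd ex unfolding E_def by (simp add: algebra_simps diff_divide_distrib)
      thus ?thesis using sq by simp
    qed
    have B: "(\<delta>/\<tau>) * exp (-\<delta>/\<tau>) \<le> 1 - exp (-\<delta>/\<tau>)"
    proof -
      have "1 + (\<delta>/\<tau>) \<le> exp (\<delta>/\<tau>)" by (rule exp_ge_add_one_self)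
      hence "(1 + \<delta>/\<tau>) * exp (-\<delta>/\<tau>) \<le> exp (\<delta>/\<tau>) * exp (-\<delta>/\<tau>)"
        by (intro mult_right_mono) auto
      thus ?thesis by (simp add: mult_exp_exp algebra_simps)
    qed
    have "\<delta> * (E * exp (-\<delta>/\<tau>)) = \<tau> * E * ((\<delta>/\<tau>) * exp (-\<delta>/\<tau>))" using tau by simp
    also have "\<dots> \<le> \<tau> * E * (1 - exp (-\<delta>/\<tau>))"
      using B E0 tau by (intro mult_left_mono) auto
    finally have C: "\<delta> * (E * exp (-\<delta>/\<tau>)) \<le> (2*\<delta>*S + n*\<delta>\<^sup>2)/(4*\<eta>)" using A by linarith
    have "(2*\<delta>*S + n*\<delta>\<^sup>2)/(4*\<eta>) = \<delta> * (S/(2*\<eta>) + (n/(4*\<eta>))*\<delta>)"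
      using eta by (simp add: field_simps power2_eq_square)
    with C d show "E*exp(-\<delta>/\<tau>) \<le> S/(2*\<eta>) + (n/(4*\<eta>))*\<delta>" by simp
  qed
  have "E \<le> S/(2*\<eta>)" by (rule lim_le2[OF tau key])
  thus ?thesis using eta unfolding S_def E_def by (simp add: field_simps)
qed

definition trm :: "real^'n^'n \<Rightarrow> real^'n^'n" where
  "trm t = (\<chi> i j. t $ j $ i)"

lemma trm_nth[simp]: "trm t $ i $ j = t $ j $ i" by (simp add: trm_def)
lemma trm_trm[simp]: "trm (trm t) = t" by (simp add: trm_def vec_eq_iff)

lemma feas_trm: "dual_feasible (trm C) v u (trm t) = dual_feasible C u v t"
  unfolding dual_feasible_def by (auto simp: add.commute)

lemma obj_trm: "dual_obj \<eta> \<tau> b a v u (trm t) = dual_obj \<eta> \<tau> a b u v t"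
proof -
  have "(\<Sum>i\<in>UNIV. \<Sum>j\<in>UNIV. (trm t $ i $ j)\<^sup>2) = (\<Sum>i\<in>UNIV. \<Sum>j\<in>UNIV. (t $ i $ j)\<^sup>2)"
    unfolding trm_nth by (rule sum.swap)
  thus ?thesis unfolding dual_obj_def by simp
qed

lemma opt_trm:
  assumes "dual_optimal C \<eta> \<tau> a b u v t"
  shows "dual_optimal (trm C) \<eta> \<tau> b a v u (trm t)"
  unfolding dual_optimal_def
proof (intro conjI allI impI)
  show "dual_feasible (trm C) v u (trm t)" using assms feas_trm unfolding dual_optimal_def by blast
  fix u' v' t' assume f: "dual_feasible (trm C) u' v' t'"
  hence "dual_feasible C v' u' (trm t')" using feas_trm[of C u' v' "trm t'"] by simp
  hence "dual_obj \<eta> \<tau> a b v' u' (trm t') \<le> dual_obj \<eta> \<tau> a b u v t"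
    using assms unfolding dual_optimal_def by blast
  thus "dual_obj \<eta> \<tau> b a u' v' t' \<le> dual_obj \<eta> \<tau> b a v u (trm t)"
    using obj_trm[of \<eta> \<tau> b a u' v' "trm t'"] obj_trm[of \<eta> \<tau> b a v u t] by simp
qed

lemma norm_trm: "max_abs_norm (trm C) = max_abs_norm C"
proof -
  have "{\<bar>trm C $ i $ j\<bar> | i j. True} = {\<bar>C $ i $ j\<bar> | i j. True}" by auto
  thus ?thesis unfolding max_abs_norm_def by simp
qed

lemma norm_ge: "\<bar>C $ i $ j\<bar> \<le> max_abs_norm (C::real^'n^'n)"
proof -
  have "{\<bar>C $ i $ j\<bar> | i j. True} = (\<lambda>(i,j). \<bar>C $ i $ j\<bar>) ` UNIV" by auto
  hence "finite {\<bar>C $ i $ j\<bar> | i j. True}" by simp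
  thus ?thesis unfolding max_abs_norm_def by (intro Max_ge) auto
qed

lemma shift_ineq:
  fixes C t :: "real^'n^'n"
  assumes opt: "dual_optimal C \<eta> \<tau> a b u v t" and tau: "\<tau> > 0" and x: "x > 0"
  shows "(\<Sum>i\<in>UNIV. exp (- u $ i / \<tau>) * a $ i) + (\<Sum>j\<in>UNIV. exp (- v $ j / \<tau>) * b $ j)
     \<le> x * (\<Sum>i\<in>UNIV. exp (- u $ i / \<tau>) * a $ i) + (\<Sum>j\<in>UNIV. exp (- v $ j / \<tau>) * b $ j) / x"
proof -
  define c where "c = \<tau> * ln x"
  define u' where "u' = (\<chi> m. u $ m - c)"
  define v' where "v' = (\<chi> m. v $ m + c)"
  have feas: "dual_feasible C u v t" using opt unfolding dual_optimal_def by blast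
  have f': "dual_feasible C u' v' t" using feas unfolding dual_feasible_def u'_def v'_def by auto
  have le: "dual_obj \<eta> \<tau> a b u' v' t \<le> dual_obj \<eta> \<tau> a b u v t" by (rule opt_le[OF opt f'])
  have e1: "\<And>m. exp (- u' $ m / \<tau>) = x * exp (- u $ m / \<tau>)"
  proof -
    fix m
    have "- u' $ m / \<tau> = ln x + - u $ m / \<tau>" using tau by (simp add: u'_def c_def diff_divide_distrib)
    thus "exp (- u' $ m / \<tau>) = x * exp (- u $ m / \<tau>)" using x by (metis exp_add exp_ln)
  qed
  have e2: "\<And>m. exp (- v' $ m / \<tau>) = exp (- v $ m / \<tau>) / x"
  proof -
    fix m
    have "- v' $ m / \<tau> = - v $ m / \<tau> + - ln x" using tau by (simp add: v'_def c_def diff_divide_distrib)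
    thus "exp (- v' $ m / \<tau>) = exp (- v $ m / \<tau>) / x" using x by (metis exp_add exp_minus exp_ln divide_inverse)
  qed
  have s1: "(\<Sum>i\<in>UNIV. exp (- u' $ i / \<tau>) * a $ i) = x * (\<Sum>i\<in>UNIV. exp (- u $ i / \<tau>) * a $ i)"
    unfolding e1 by (simp add: sum_distrib_left mult.assoc)
  have s2: "(\<Sum>i\<in>UNIV. exp (- v' $ i / \<tau>) * b $ i) = (\<Sum>i\<in>UNIV. exp (- v $ i / \<tau>) * b $ i) / x"
    unfolding e2 by (simp add: sum_divide_distrib)
  have "\<tau> * (x * (\<Sum>i\<in>UNIV. exp (- u $ i / \<tau>) * a $ i) + (\<Sum>j\<in>UNIV. exp (- v $ j / \<tau>) * b $ j) / x)
     \<ge> \<tau> * ((\<Sum>i\<in>UNIV. exp (- u $ i / \<tau>) * a $ i) + (\<Sum>j\<in>UNIV. exp (- v $ j / \<tau>) * b $ j))"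
    using le unfolding dual_obj_def s1 s2 distrib_left by linarith
  thus ?thesis using tau by simp
qed

lemma u_bound:
  fixes C :: "real^'n^'n" and a b u v :: "real^'n" and t :: "real^'n^'n"
    and \<tau> \<eta> :: real
  assumes C_nonneg: "\<forall>i j. C $ i $ j \<ge> 0"
    and tau: "\<tau> > 0"
    and eta: "\<eta> > 0"
    and a_simplex: "a \<in> prob_simplex" and a_pos: "\<forall>i. a $ i > 0"
    and b_simplex: "b \<in> prob_simplex" and b_pos: "\<forall>j. b $ j > 0"
    and opt: "dual_optimal C \<eta> \<tau> a b u v t"
  shows "u $ i \<le> max_abs_norm C + 2 * \<eta>"
proof (rule ccontr)
  define M where "M = max_abs_norm C"
  assume "\<not> ?thesis"
  hence ui: "u $ i > M + 2 * \<eta>" by (simp add: M_def)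
  have feas: "dual_feasible C u v t" using opt unfolding dual_optimal_def by blast
  have tnn: "\<And>k j. t $ k $ j \<ge> 0" using feas unfolding dual_feasible_def by blast
  have tge: "\<And>k j. t $ k $ j \<ge> u $ k + v $ j - C $ k $ j" using feas unfolding dual_feasible_def by blast
  have CM: "\<And>k j. C $ k $ j \<le> M" using norm_ge[of C] abs_ge_self unfolding M_def by (meson order_trans)
  have M0: "M \<ge> 0" using CM[of i i] C_nonneg by (meson order_trans)
  have asum: "(\<Sum>k\<in>UNIV. a $ k) = 1" using a_simplex by (simp add: prob_simplex_def)
  have bsum: "(\<Sum>k\<in>UNIV. b $ k) = 1" using b_simplex by (simp add: prob_simplex_def)
  have ai: "a $ i \<le> 1"
    using asum member_le_sum[of i UNIV "\<lambda>k. a $ k"] a_pos by (simp add: less_imp_le)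
  have ui0: "u $ i > 0" using ui M0 eta by linarith
  have ei: "exp (- u $ i / \<tau>) < 1" using ui0 tau by simp
  have "(\<Sum>j\<in>UNIV. t $ i $ j) \<le> 2 * \<eta> * (a $ i * exp (- u $ i / \<tau>))"
    using row_upper[OF opt eta tau] a_pos less_imp_le by blast
  also have "\<dots> < 2 * \<eta>"
  proof -
    have "a $ i * exp (- u $ i / \<tau>) \<le> 1 * exp (- u $ i / \<tau>)"
      by (rule mult_right_mono) (use ai in auto)
    hence "a $ i * exp (- u $ i / \<tau>) < 1" using ei by linarith
    thus ?thesis using eta by simp
  qed
  finally have Si: "(\<Sum>j\<in>UNIV. t $ i $ j) < 2 * \<eta>" .
  have vneg: "\<And>j. v $ j < 0"
  proof -
    fix j
    have "t $ i $ j \<le> (\<Sum>j\<in>UNIV. t $ i $ j)" using tnn by (intro member_le_sum) auto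
    thus "v $ j < 0" using tge[of i j] CM[of i j] Si ui by linarith
  qed
  have upos: "\<And>k. u $ k > 0"
  proof -
    fix k
    have "0 < 2 * \<eta> * (a $ k * exp (- u $ k / \<tau>))" using eta a_pos by simp
    also have "\<dots> \<le> (\<Sum>j\<in>UNIV. t $ k $ j)"
      using row_lower[OF opt eta tau] a_pos less_imp_le by blast
    finally have sp: "0 < (\<Sum>j\<in>UNIV. t $ k $ j)" .
    have "\<exists>j. t $ k $ j \<noteq> 0"
    proof (rule ccontr)
      assume "\<not> (\<exists>j. t $ k $ j \<noteq> 0)"
      hence "(\<Sum>j\<in>UNIV. t $ k $ j) = 0" by simp
      thus False using sp by simp
    qed
    then obtain j where "t $ k $ j \<noteq> 0" by blast
    hence tp: "t $ k $ j > 0" using tnn[of k j] by simp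
    have "t $ k $ j = u $ k + v $ j - C $ k $ j" by (rule comp_slack[OF opt eta tp])
    thus "u $ k > 0" using tp vneg[of j] C_nonneg[rule_format, of k j] by linarith
  qed
  define A where "A = (\<Sum>i\<in>UNIV. exp (- u $ i / \<tau>) * a $ i)"
  define B where "B = (\<Sum>j\<in>UNIV. exp (- v $ j / \<tau>) * b $ j)"
  have A1: "A < 1"
  proof -
    have "A < (\<Sum>k\<in>UNIV. a $ k)" unfolding A_def
    proof (rule sum_strict_mono)
      fix k :: 'n
      have "exp (- u $ k / \<tau>) < 1" using upos[of k] tau by simp
      thus "exp (- u $ k / \<tau>) * a $ k < a $ k" using a_pos by simp
    qed auto
    thus ?thesis using asum by simp
  qed
  have B1: "B > 1"
  proof -
    have "(\<Sum>k\<in>UNIV. b $ k) < B" unfolding B_def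
    proof (rule sum_strict_mono)
      fix k :: 'n
      have "exp (- v $ k / \<tau>) > 1" using vneg[of k] tau by (simp add: divide_neg_pos)
      thus "b $ k < exp (- v $ k / \<tau>) * b $ k" using b_pos by simp
    qed auto
    thus ?thesis using bsum by simp
  qed
  have A0: "A > 0" unfolding A_def using a_pos by (intro sum_pos) auto
  define x where "x = (1 + B / A) / 2"
  have BA: "B / A > 1" using A0 A1 B1 by simp
  have x1: "x > 1" using BA by (simp add: x_def)
  have x2: "A * x < B"
  proof -
    have h: "\<And>y::real. 1 < y \<Longrightarrow> (1 + y) / 2 < y" by simp
    have "x < B / A" using h[OF BA] unfolding x_def .
    thus ?thesis using A0 by (simp add: pos_less_divide_eq mult.commute)
  qed
  have ineq: "A + B \<le> x * A + B / x"
    using shift_ineq[OF opt tau, of x] x1 unfolding A_def B_def by simp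
  have "(x - 1) * (A * x - B) < 0" using x1 x2 by (simp add: mult_pos_neg)
  hence "A * x * x - (A + B) * x + B < 0" by (simp add: algebra_simps)
  moreover have "(A + B) * x \<le> (x * A + B / x) * x" using ineq x1 by (intro mult_right_mono) auto
  moreover have "(x * A + B / x) * x = A * x * x + B" using x1 by (simp add: field_simps)
  ultimately show False by linarith
qed

theorem mainTheorem10:
  fixes C :: "real^'n^'n" and a b u v :: "real^'n" and t :: "real^'n^'n"
    and \<tau> \<eta> :: real
  assumes C_nonneg: "\<forall>i j. C $ i $ j \<ge> 0"
    and tau_pos: "\<tau> > 0"
    and eta_pos: "\<eta> > 0"
    and a_simplex: "a \<in> prob_simplex" and a_pos: "\<forall>i. a $ i > 0"
    and b_simplex: "b \<in> prob_simplex" and b_pos: "\<forall>j. b $ j > 0"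
    and opt: "dual_optimal C \<eta> \<tau> a b u v t"
  shows "(\<forall>i. u $ i \<le> max_abs_norm C + 2 * \<eta>) \<and> (\<forall>j. v $ j \<le> max_abs_norm C + 2 * \<eta>)"
proof (intro conjI allI)
  fix i show "u $ i \<le> max_abs_norm C + 2 * \<eta>"
    by (rule u_bound[OF C_nonneg tau_pos eta_pos a_simplex a_pos b_simplex b_pos opt])
next
  fix j
  have Ct: "\<forall>i j. trm C $ i $ j \<ge> 0" using C_nonneg by simp
  have "v $ j \<le> max_abs_norm (trm C) + 2 * \<eta>"
    by (rule u_bound[OF Ct tau_pos eta_pos b_simplex b_pos a_simplex a_pos opt_trm[OF opt]])
  thus "v $ j \<le> max_abs_norm C + 2 * \<eta>" by (simp add: norm_trm)
qed

end
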